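(* Consider the distributed detection model in the context with $N\ge 2$, and let $m=\frac{N}{2N-2}$. Suppose the fusion center uses the majority rule $K^*=\lceil\frac{N+1}{2}\rceil$ and that $\alpha<\min\{0.5-P_f,\;1-m/P_d\}$. Then for any fixed $P_{1,0}\in[0,1]$, the error probability $P_E$ is a quasi-convex function of $P_{0,1}\in[0,1]$.
   Context: Binary hypothesis test between $H_0$ and $H_1$ with priors $P_0,P_1\in(0,1)$, $P_0+P_1=1$. There are $N$ sensors; conditionally on the hypothesis, their local decisions $v_i\in\{0,1\}$ are i.i.d. with $P(v_i=1\mid H_1)=P_d$, $P(v_i=1\mid H_0)=P_f$, where $0<P_f<P_d<1$. Each sensor independently is Byzantine with probability $\alpha\in[0,1]$. Honest nodes send $u_i=v_i$; a Byzantine node sends $u_i=1$ with probability $P_{1,0}$ when $v_i=0$ and sends $u_i=0$ with probability $P_{0,1}$ when $v_i=1$. Hence conditionally on $H_j$ the $u_i$ are i.i.d. with $P(u_i=1\mid H_0)=\pi_{1,0}=\alpha(P_{1,0}(1-P_f)+(1-P_{0,1})P_f)+(1-\alpha)P_f$ and $P(u_i=1\mid H_1)=\pi_{1,1}=\alpha(P_{1,0}(1-P_d)+(1-P_{0,1})P_d)+(1-\alpha)P_d$. A $K$-out-of-$N$ fusion rule decides $H_1$ iff at least $K$ of the $u_i$ equal $1$; its global false alarm and detection probabilities are $Q_F=\sum_{i=K}^N\binom{N}{i}\pi_{1,0}^i(1-\pi_{1,0})^{N-i}$ and $Q_D=\sum_{i=K}^N\binom{N}{i}\pi_{1,1}^i(1-\pi_{1,1})^{N-i}$,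 and its error probability is $P_E=P_0Q_F+P_1(1-Q_D)$. A function $f$ on an interval is called quasi-convex if there is a point $x^*$ such that $f$ is non-increasing for $x\le x^*$ and non-decreasing for $x\ge x^*$ (this includes $f$ monotone on the whole interval). *)

theory Defs
  imports Complex_Main
begin

text \<open>Probability that a sensor's transmitted bit equals 1 under H0 and H1.\<close>
definition pi10 :: "real \<Rightarrow> real \<Rightarrow> real \<Rightarrow> real \<Rightarrow> real" where
  "pi10 \<alpha> Pf P10 P01 =
     \<alpha> * (P10 * (1 - Pf) + (1 - P01) * Pf) + (1 - \<alpha>) * Pf"

definition pi11 :: "real \<Rightarrow> real \<Rightarrow> real \<Rightarrow> real \<Rightarrow> real" where
  "pi11 \<alpha> Pd P10 P01 =
     \<alpha> * (P10 * (1 - Pd) + (1 - P01) * Pd) + (1 - \<alpha>) * Pd"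

definition tailprob :: "nat \<Rightarrow> nat \<Rightarrow> real \<Rightarrow> real" where
  "tailprob N K p = (\<Sum>i=K..N. real (N choose i) * p ^ i * (1 - p) ^ (N - i))"

definition QF :: "nat \<Rightarrow> nat \<Rightarrow> real \<Rightarrow> real \<Rightarrow> real \<Rightarrow> real \<Rightarrow> real" where
  "QF N K \<alpha> Pf P10 P01 = tailprob N K (pi10 \<alpha> Pf P10 P01)"

definition QD :: "nat \<Rightarrow> nat \<Rightarrow> real \<Rightarrow> real \<Rightarrow> real \<Rightarrow> real \<Rightarrow> real" where
  "QD N K \<alpha> Pd P10 P01 = tailprob N K (pi11 \<alpha> Pd P10 P01)"

definition PE :: "real \<Rightarrow> real \<Rightarrow> nat \<Rightarrow> nat \<Rightarrow> real \<Rightarrow> real \<Rightarrow> real \<Rightarrow> real \<Rightarrow> real \<Rightarrow> real" where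
  "PE P0 P1 N K \<alpha> Pf Pd P10 P01 =
     P0 * QF N K \<alpha> Pf P10 P01 + P1 * (1 - QD N K \<alpha> Pd P10 P01)"

definition quasi_convex_on :: "real set \<Rightarrow> (real \<Rightarrow> real) \<Rightarrow> bool" where
  "quasi_convex_on S f \<longleftrightarrow> (\<exists>xs.
     (\<forall>x\<in>S. \<forall>y\<in>S. x \<le> y \<and> y \<le> xs \<longrightarrow> f y \<le> f x) \<and>
     (\<forall>x\<in>S. \<forall>y\<in>S. xs \<le> x \<and> x \<le> y \<longrightarrow> f x \<le> f y))"

end

theory Submission
  imports Defs
begin

definition uu :: "nat \<Rightarrow> real \<Rightarrow> nat \<Rightarrow> real" where
  "uu N p i = real N * real ((N-1) choose i) * p^i * (1-p)^(N-1-i)"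

lemma term_deriv:
  assumes "1 \<le> i"
  shows "DERIV (\<lambda>p. real (N choose i) * p^i * (1-p)^(N-i)) p :> uu N p (i-1) - uu N p i"
proof -
  have e1: "real (N choose i) * real i = real N * real ((N-1) choose (i-1))"
    using times_binomial_minus1_eq[of i N] assms
    by (metis mult.commute of_nat_mult  less_le_trans zero_less_one)
  have e2: "real (N choose i) * real (N-i) = real N * real ((N-1) choose i)"
    using binomial_absorb_comp[of N i] by (metis mult.commute of_nat_mult)
  have e3: "N - 1 - (i - 1) = N - i" using assms by simp
  have e4: "N - i - 1 = N - 1 - i" by simp
  obtain j where j: "i = Suc j" using assms by (cases i) auto
  have e5: "N - Suc j - 1 = N - 1 - Suc j" by simp
  have e1': "real (N choose Suc j) * real (Suc j) = real N * real ((N-1) choose j)" using e1 j by simp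
  have u1: "uu N p (Suc j - 1) = real (N choose Suc j) * real (Suc j) * p^j * (1-p)^(N - Suc j)"
    unfolding uu_def using e1' by (simp add: e5)
  have u2: "uu N p (Suc j) = real (N choose Suc j) * real (N - Suc j) * p^(Suc j) * (1-p)^(N - Suc j - 1)"
    unfolding uu_def using e2[unfolded j] by (simp add: e5)
  show ?thesis
    unfolding j u1 u2
    apply (rule derivative_eq_intros refl)+
    by (simp add: algebra_simps)
qed

lemma telesc:
  fixes f :: "nat \<Rightarrow> real"
  shows "1 \<le> m \<Longrightarrow> m \<le> Suc n \<Longrightarrow> (\<Sum>i=m..n. f (i-1) - f i) = f (m-1) - f n"
proof (induction n)
  case 0 then show ?case by (cases m) auto
next
  case (Suc n)
  show ?case
  proof (cases "m = Suc (Suc n)")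
    case True then show ?thesis by simp
  next
    case False
    then have "m \<le> Suc n" using Suc.prems by simp
    then show ?thesis using Suc by (simp add: sum.atLeast_Suc_atMost_Suc_shift sum.cl_ivl_Suc)
  qed
qed

lemma tail_deriv:
  assumes "1 \<le> K" "K \<le> N"
  shows "DERIV (tailprob N K) p :> uu N p (K-1)"
proof -
  have "DERIV (\<lambda>q. \<Sum>i=K..N. real (N choose i) * q^i * (1-q)^(N-i)) p :> (\<Sum>i=K..N. uu N p (i-1) - uu N p i)"
    by (rule DERIV_sum, rule term_deriv) (use assms in auto)
  moreover have "(\<Sum>i=K..N. uu N p (i-1) - uu N p i) = uu N p (K-1)"
    using telesc[of K N "uu N p"] assms by (simp add: uu_def)
  ultimately show ?thesis unfolding tailprob_def[abs_def] by simp
qed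

lemma uu_pos:
  assumes "0 < p" "p < 1" "1 \<le> K" "K \<le> N"
  shows "0 < uu N p (K-1)"
  using assms unfolding uu_def by (simp add: zero_less_binomial_iff)

lemma ln4: "0 < (A::real) \<Longrightarrow> 0 < B \<Longrightarrow> 0 < C \<Longrightarrow> 0 < D \<Longrightarrow> ln (A*B*C*D) = ln A + ln B + ln C + ln D"
  by (simp add: ln_mult)

lemma ln_uu:
  assumes "0 < p" "p < 1" "0 < q" "1 \<le> K" "K \<le> N"
  shows "ln (q * uu N p (K-1)) = ln q + ln (real N * real ((N-1) choose (K-1)))
           + real (K-1) * ln p + real (N-K) * ln (1-p)"
proof -
  have c: "0 < real N * real ((N-1) choose (K-1))" using assms by (simp add: zero_less_binomial_iff)
  have "N - 1 - (K - 1) = N - K" using assms by simp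
  then have "q * uu N p (K-1) = q * (real N * real ((N-1) choose (K-1))) * p^(K-1) * (1-p)^(N-K)"
    unfolding uu_def by simp
  moreover have "ln (q * (real N * real ((N-1) choose (K-1))) * p^(K-1) * (1-p)^(N-K))
     = ln q + ln (real N * real ((N-1) choose (K-1))) + ln (p^(K-1)) + ln ((1-p)^(N-K))"
    by (rule ln4) (use assms c in auto)
  ultimately show ?thesis using assms by (simp add: ln_realpow mult.assoc del: of_nat_diff)
qed

theorem lemma3:
  fixes N :: nat and P0 P1 Pf Pd \<alpha> P10 :: real
  assumes "N \<ge> 2"
    and "0 < P0" "P0 < 1" "0 < P1" "P1 < 1" "P0 + P1 = 1"
    and "0 < Pf" "Pf < Pd" "Pd < 1"
    and "0 \<le> \<alpha>" "\<alpha> \<le> 1"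
    and "\<alpha> < min (1/2 - Pf) (1 - (real N / (2 * real N - 2)) / Pd)"
    and "0 \<le> P10" "P10 \<le> 1"
  shows "quasi_convex_on {0..1}
           (\<lambda>P01. PE P0 P1 N (nat \<lceil>(real N + 1) / 2\<rceil>) \<alpha> Pf Pd P10 P01)"
proof -
  define K where "K = nat \<lceil>(real N + 1) / 2\<rceil>"
  define a where "a = K - 1"
  define b where "b = N - K"
  define m where "m = real N / (2 * real N - 2)"
  have rK: "real K = real_of_int \<lceil>(real N + 1) / 2\<rceil>"
  proof -
    have "0 \<le> \<lceil>(real N + 1) / 2\<rceil>" by (simp add: ceiling_le_zero[symmetric] not_le) 
    then show ?thesis by (simp add: K_def)
  qed
  have cc: "real K - 1 < (real N + 1) / 2" "(real N + 1) / 2 \<le> real K"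
    using ceiling_correct[of "(real N + 1) / 2"] unfolding rK[symmetric] by auto
  have c1: "real N + 1 \<le> 2 * real K" using cc(2) by simp
  have c2: "2 * real K < real N + 3" using cc(1) by simp
  have "N + 1 \<le> 2 * K" "2 * K < N + 3" using c1 c2 by linarith+
  then have "2 * K \<le> N + 2" by simp
  then have K1: "real N + 1 \<le> 2 * real K" and K2: "2 * real K \<le> real N + 2"
    using c1 by linarith+
  have K1': "1 \<le> K" "K \<le> N" using K1 K2 assms(1) by linarith+
  have ab: "real a + real b = real N - 1" "real N - 1 \<le> 2 * real a" "2 * real a \<le> real N"
    using K1 K2 K1' unfolding a_def b_def by (simp_all add: of_nat_diff)
  have m2: "(real N - 1) * m = real N / 2" using assms(1) unfolding m_def by (simp add: field_simps)
  have m_pos: "0 < m" unfolding m_def using assms(1) by simp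
  have al: "\<alpha> < 1/2 - Pf" "\<alpha> < 1 - m / Pd" using assms(12) unfolding m_def by auto
  define x where "x = (\<lambda>t. pi10 \<alpha> Pf P10 t)"
  define y where "y = (\<lambda>t. pi11 \<alpha> Pd P10 t)"
  have xb: "0 < x t" "x t < 1/2" if "t \<in> {0..1}" for t
  proof -
    have t: "0 \<le> t" "t \<le> 1" using that by auto
    have xe: "x t = Pf - \<alpha>*Pf*t + \<alpha>*P10*(1-Pf)" unfolding x_def pi10_def by (simp add: algebra_simps)
    have "\<alpha>*Pf*t \<le> \<alpha>*Pf" using t assms by (simp add: mult_left_le)
    moreover have "\<alpha>*Pf < Pf" using al assms by simp
    moreover have "0 \<le> \<alpha>*P10*(1-Pf)" using assms by simp
    moreover have "\<alpha>*P10*(1-Pf) \<le> \<alpha>"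
    proof -
      have "P10*(1-Pf) \<le> 1" using assms by (intro mult_le_one) auto
      then have "\<alpha>*(P10*(1-Pf)) \<le> \<alpha>" using assms by (intro mult_left_le) auto
      then show ?thesis by (simp add: mult.assoc)
    qed
    moreover have "0 \<le> \<alpha>*Pf*t" using assms t by simp
    ultimately show "0 < x t" "x t < 1/2" unfolding xe using al by linarith+
  qed
  have yb: "m < y t" "y t < 1" if "t \<in> {0..1}" for t
  proof -
    have t: "0 \<le> t" "t \<le> 1" using that by auto
    have ye: "y t = Pd - \<alpha>*Pd*t + \<alpha>*P10*(1-Pd)" unfolding y_def pi11_def by (simp add: algebra_simps)
    have "\<alpha>*Pd*t \<le> \<alpha>*Pd" using t assms by (simp add: mult_left_le)
    moreover have "m < Pd - \<alpha>*Pd" using al(2) assms by (simp add: field_simps)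
    moreover have "0 \<le> \<alpha>*P10*(1-Pd)" using assms by simp
    moreover have "\<alpha>*P10*(1-Pd) \<le> \<alpha>*(1-Pd)"
    proof -
      have "\<alpha>*P10 \<le> \<alpha>" using assms by (intro mult_left_le) auto
      then show ?thesis using assms by (intro mult_right_mono) auto
    qed
    moreover have "\<alpha>*(1-Pd) < 1 - Pd" using al assms by simp
    moreover have "0 \<le> \<alpha>*Pd*t" using assms t by simp
    ultimately show "m < y t" "y t < 1" unfolding ye by linarith+
  qed
  have dx: "DERIV x t :> -(\<alpha>*Pf)" for t unfolding x_def pi10_def
    by (rule derivative_eq_intros refl)+ simp
  have dy: "DERIV y t :> -(\<alpha>*Pd)" for t unfolding y_def pi11_def
    by (rule derivative_eq_intros refl)+ simp
  define f where "f = (\<lambda>t. PE P0 P1 N K \<alpha> Pf Pd P10 t)"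
  define D where "D = (\<lambda>t. \<alpha> * (P1 * Pd * uu N (y t) a - P0 * Pf * uu N (x t) a))"
  have df: "DERIV f t :> D t" for t
  proof -
    have "DERIV (\<lambda>t. tailprob N K (x t)) t :> uu N (x t) a * -(\<alpha>*Pf)"
      using DERIV_chain2[OF tail_deriv[OF K1'] dx] unfolding a_def by simp
    moreover have "DERIV (\<lambda>t. tailprob N K (y t)) t :> uu N (y t) a * -(\<alpha>*Pd)"
      using DERIV_chain2[OF tail_deriv[OF K1'] dy] unfolding a_def by simp
    ultimately show ?thesis unfolding f_def PE_def QF_def QD_def D_def x_def y_def
      by (auto intro!: derivative_eq_intros simp: algebra_simps)
  qed
  define L where "L = (\<lambda>t. real a * ln (y t) + real b * ln (1 - y t) - real a * ln (x t) - real b * ln (1 - x t))"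
  define C where "C = ln (P0*Pf) - ln (P1*Pd)"
  have eqv: "D t > 0 \<longleftrightarrow> L t > C" if "t \<in> {0..1}" "\<alpha> > 0" for t
  proof -
    have "D t > 0 \<longleftrightarrow> P0 * Pf * uu N (x t) a < P1 * Pd * uu N (y t) a"
      unfolding D_def using that by (simp add: zero_less_mult_iff)
    also have "\<dots> \<longleftrightarrow> ln (P0 * Pf * uu N (x t) a) < ln (P1 * Pd * uu N (y t) a)"
    proof -
      have m0: "0 < m" unfolding m_def using assms(1) by simp
      have p1: "0 < uu N (x t) a" unfolding a_def
        by (rule uu_pos[OF _ _ K1']) (use xb[OF that(1)] in auto)
      have p2: "0 < uu N (y t) a" unfolding a_def
        by (rule uu_pos[OF _ _ K1']) (use yb[OF that(1)] m0 in auto)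
      show ?thesis using p1 p2 assms by (intro ln_less_cancel_iff[symmetric]) auto
    qed
    also have "\<dots> \<longleftrightarrow> L t > C"
    proof -
      have m0: "0 < m" unfolding m_def using assms(1) by simp
      have e1: "ln (P0*Pf * uu N (x t) (K-1)) = ln (P0*Pf) + ln (real N * real ((N-1) choose (K-1)))
           + real (K-1) * ln (x t) + real (N-K) * ln (1-x t)"
        by (rule ln_uu[OF _ _ _ K1']) (use xb[OF that(1)] assms in auto)
      have e2: "ln (P1*Pd * uu N (y t) (K-1)) = ln (P1*Pd) + ln (real N * real ((N-1) choose (K-1)))
           + real (K-1) * ln (y t) + real (N-K) * ln (1-y t)"
        by (rule ln_uu[OF _ _ _ K1']) (use yb[OF that(1)] assms m0 in auto)
      show ?thesis unfolding L_def C_def a_def b_def e1 e2 by linarith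
    qed
    finally show ?thesis .
  qed
  define Ld where "Ld = (\<lambda>t. real a * (inverse (y t) * -(\<alpha>*Pd)) + real b * (inverse (1 - y t) * -(-(\<alpha>*Pd)))
     - (real a * (inverse (x t) * -(\<alpha>*Pf)) + real b * (inverse (1 - x t) * -(-(\<alpha>*Pf)))))"
  have dL: "DERIV L t :> Ld t" if "t \<in> {0..1}" for t
  proof -
    have p: "0 < x t" "0 < y t" "0 < 1 - x t" "0 < 1 - y t"
      using xb[OF that] yb[OF that] m_pos by auto
    have ddy: "DERIV (\<lambda>t. 1 - y t) t :> -(-(\<alpha>*Pd))" using DERIV_diff[OF DERIV_const dy] by simp
    have ddx: "DERIV (\<lambda>t. 1 - x t) t :> -(-(\<alpha>*Pf))" using DERIV_diff[OF DERIV_const dx] by simp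
    have d1: "DERIV (\<lambda>t. ln (y t)) t :> inverse (y t) * -(\<alpha>*Pd)"
      by (rule DERIV_chain2[OF DERIV_ln[OF p(2)] dy])
    have d2: "DERIV (\<lambda>t. ln (1 - y t)) t :> inverse (1 - y t) * -(-(\<alpha>*Pd))"
      by (rule DERIV_chain2[OF DERIV_ln[OF p(4)] ddy])
    have d3: "DERIV (\<lambda>t. ln (x t)) t :> inverse (x t) * -(\<alpha>*Pf)"
      by (rule DERIV_chain2[OF DERIV_ln[OF p(1)] dx])
    have d4: "DERIV (\<lambda>t. ln (1 - x t)) t :> inverse (1 - x t) * -(-(\<alpha>*Pf))"
      by (rule DERIV_chain2[OF DERIV_ln[OF p(3)] ddx])
    have "DERIV (\<lambda>t. (real a * ln (y t) + real b * ln (1 - y t)) - (real a * ln (x t) + real b * ln (1 - x t))) t :> Ld t"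
      unfolding Ld_def
      by (intro DERIV_diff DERIV_add DERIV_cmult d1 d2 d3 d4)
    then show ?thesis unfolding L_def by (simp add: algebra_simps)
  qed
  have dLnn: "0 \<le> Ld t"
    if "t \<in> {0..1}" for t
  proof -
    define X where "X = x t"
    define Y where "Y = y t"
    have X: "0 < X" "X < 1/2" using xb[OF that] unfolding X_def by auto
    have Y: "m < Y" "Y < 1" using yb[OF that] unfolding Y_def by auto
    have m0: "0 < m" unfolding m_def using assms(1) by simp
    have N1: "0 < real N - 1" using assms(1) by simp
    have "(real N - 1) * X \<le> (real N - 1) * (1/2)" using X N1 by (intro mult_left_mono) auto
    moreover have "(real a + real b) * X = real a * X + real b * X" by (simp add: distrib_right)
    moreover have "real a * (1 - X) = real a - real a * X" by (simp add: right_diff_distrib)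
    ultimately have "real b * X \<le> real a * (1 - X)" using ab by simp
    then have h1: "real b / (1-X) \<le> real a / X" using X by (simp add: field_simps)
    have "(real N - 1) * m \<le> (real N - 1) * Y" using Y N1 by (intro mult_left_mono) auto
    moreover have "(real a + real b) * Y = real a * Y + real b * Y" by (simp add: distrib_right)
    moreover have "real a * (1 - Y) = real a - real a * Y" by (simp add: right_diff_distrib)
    ultimately have "real a * (1 - Y) \<le> real b * Y" using ab m2 by simp
    then have h2: "real a / Y \<le> real b / (1-Y)" using Y m0 by (simp add: field_simps)
    have eq: "Ld t
      = \<alpha>*Pf*(real a / X - real b / (1-X)) + \<alpha>*Pd*(real b / (1-Y) - real a / Y)"
      unfolding Ld_def X_def Y_def by (simp add: divide_inverse algebra_simps)
    have "0 \<le> \<alpha>*Pf*(real a / X - real b / (1-X))" using h1 assms by simp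
    moreover have "0 \<le> \<alpha>*Pd*(real b / (1-Y) - real a / Y)" using h2 assms by simp
    ultimately show ?thesis using eq by linarith
  qed
  have key: "D t > 0" if "s \<le> t" "s \<in> {0..1}" "t \<in> {0..1}" "D s > 0" for s t
  proof -
    have "\<alpha> \<noteq> 0" using that unfolding D_def by auto
    then have a0: "\<alpha> > 0" using assms by simp
    have "L s \<le> L t"
      by (rule DERIV_nonneg_imp_nondecreasing[OF that(1)])
         (use that in \<open>force intro: dL dLnn\<close>)
    then show ?thesis using eqv[OF that(2) a0] eqv[OF that(3) a0] that(4) by linarith
  qed
  define A where "A = {t\<in>{0..1}. D t \<le> 0}"
  have down: "s \<in> A" if "t \<in> A" "s \<in> {0..1}" "s \<le> t" for s t
    using key[of s t] that unfolding A_def by force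
  have bdd: "bdd_above A" unfolding A_def by (rule bdd_aboveI[of _ 1]) auto
  define xs where "xs = (if A = {} then 0 else Sup A)"
  have "quasi_convex_on {0..1} f"
    unfolding quasi_convex_on_def
  proof (intro exI[of _ xs] conjI ballI impI)
    fix u v assume uv: "u \<in> {0..1}" "v \<in> {0..1}" "u \<le> v \<and> v \<le> xs"
    show "f v \<le> f u"
    proof (cases "u = v")
      case False
      then have "u < v" using uv by simp
      then obtain z where z: "u < z" "z < v" "f v - f u = (v - u) * D z"
        using MVT2[of u v f D] df by blast
      have "A \<noteq> {}" using uv z unfolding xs_def by (auto split: if_splits)
      then have "z < Sup A" using z uv unfolding xs_def by auto
      then obtain w where "w \<in> A" "z < w" using less_cSup_iff[OF \<open>A \<noteq> {}\<close> bdd] by auto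
      then have "z \<in> A" using down[of w z] z uv by auto
      then have "D z \<le> 0" unfolding A_def by auto
      then have "(v - u) * D z \<le> 0" using \<open>u < v\<close> by (intro mult_nonneg_nonpos) auto
      then show ?thesis using z by linarith
    qed simp
  next
    fix u v assume uv: "u \<in> {0..1}" "v \<in> {0..1}" "xs \<le> u \<and> u \<le> v"
    show "f u \<le> f v"
    proof (cases "u = v")
      case False
      then have "u < v" using uv by simp
      then obtain z where z: "u < z" "z < v" "f v - f u = (v - u) * D z"
        using MVT2[of u v f D] df by blast
      have "z \<notin> A"
      proof
        assume "z \<in> A"
        then have "z \<le> Sup A" using bdd by (rule cSup_upper)
        then show False using z uv \<open>z \<in> A\<close> unfolding xs_def by (auto split: if_splits)
      qed
      then have "D z > 0" using z uv unfolding A_def by auto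
      then have "(v - u) * D z > 0" using \<open>u < v\<close> by (intro mult_pos_pos) auto
      then show ?thesis using z by linarith
    qed simp
  qed
  then show ?thesis unfolding f_def K_def .
qed
end
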